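(* Let $J$ be an indecomposable module in category $\mathcal{J}$, let $\lambda\in\mathbb{C}^n$ be a weight of $J$, and let $U=J_\lambda$. For $j=1,\dots,n$ and $s\in\mathbb{Z}^n$, define $D_j(s)\in\mathrm{End}\,U$ by $D_j(s)u=e_{-s}\,(d_j(s)u)$. Then for all $j,k$ and $s,m\in\mathbb{Z}^n$, $$[D_j(s),D_k(m)]=m_j\big(D_k(s+m)-D_k(m)\big)-s_k\big(D_j(s+m)-D_j(s)\big).$$
   Context: Let $n\ge 1$. Let $\mathcal{F}(\mathbb{T}^n)$ be the commutative algebra with $\mathbb{C}$-basis $e_m=e^{2\pi i m\cdot x}$, $m\in\mathbb{Z}^n$, and $e_me_k=e_{m+k}$. Let $W_n$ be the Lie algebra with $\mathbb{C}$-basis $d_j(s)=\frac{1}{2\pi i}e^{2\pi i s\cdot x}\frac{\partial}{\partial x^j}$, for $j=1,\dots,n$ and $s\in\mathbb{Z}^n$, and bracket $$[d_j(s),d_k(m)]=m_j\,d_k(s+m)-s_k\,d_j(s+m).$$ $W_n$ acts on $\mathcal{F}(\mathbb{T}^n)$ by derivations via $d_j(s)e_m=m_je_{m+s}$. Write $d_j=d_j(0)$. Category $\mathcal{J}$ consists of $W_n$-modules $J$ that are also $\mathcal{F}(\mathbb{T}^n)$-modules and satisfy: (J1) each $d_j$ acts diagonalizably on $J$; (J2) $J$ is a free $\mathcal{F}(\mathbb{T}^n)$-module of finite rank; (J3) $u(fw)=(uf)w+f(uw)$ for all $u\in W_n$, $f\in\mathcal{F}(\mathbb{T}^n)$, $w\in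 J$. For $\mu\in\mathbb{C}^n$, the weight space is $J_\mu=\{w\in J: d_jw=\mu_jw \text{ for all } j\}$. Submodules are subspaces invariant under both $W_n$ and $\mathcal{F}(\mathbb{T}^n)$. Indecomposable modules are nonzero. *)

theory Defs
  imports Complex_Main
begin

text \<open>Multi-indices in Z^n are functions 'n => int for a finite nonempty index type 'n
 (n = CARD('n) >= 1). E m is the action of e_m in F(T^n); d j s is the action of d_j(s).\<close>

definition zidx :: "'n \<Rightarrow> int" where "zidx = (\<lambda>_. 0)"
definition addz :: "('n \<Rightarrow> int) \<Rightarrow> ('n \<Rightarrow> int) \<Rightarrow> ('n \<Rightarrow> int)"
  where "addz s m = (\<lambda>i. s i + m i)"
definition negz :: "('n \<Rightarrow> int) \<Rightarrow> ('n \<Rightarrow> int)" where "negz s = (\<lambda>i. - s i)"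

text \<open>(J2): free F(T^n)-module of finite rank, with basis b 0, ..., b (r-1).
 An element of F is a finite linear combination of the e_m.\<close>
definition free_finite_rank ::
  "(complex \<Rightarrow> 'v::ab_group_add \<Rightarrow> 'v) \<Rightarrow> (('n::finite \<Rightarrow> int) \<Rightarrow> 'v \<Rightarrow> 'v) \<Rightarrow> bool" where
  "free_finite_rank sc E \<longleftrightarrow>
    (\<exists>(r::nat) (b::nat \<Rightarrow> 'v).
      (\<forall>w. \<exists>M c. finite M \<and> w = (\<Sum>i<r. \<Sum>m\<in>M. sc (c i m) (E m (b i)))) \<and>
      (\<forall>M c. finite M \<longrightarrow> (\<Sum>i<r. \<Sum>m\<in>M. sc (c i m) (E m (b i))) = 0
              \<longrightarrow> (\<forall>i<r. \<forall>m\<in>M. c i m = 0)))"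

definition in_cat_J ::
  "(complex \<Rightarrow> 'v::ab_group_add \<Rightarrow> 'v) \<Rightarrow> (('n::finite \<Rightarrow> int) \<Rightarrow> 'v \<Rightarrow> 'v)
    \<Rightarrow> ('n \<Rightarrow> ('n \<Rightarrow> int) \<Rightarrow> 'v \<Rightarrow> 'v) \<Rightarrow> bool" where
  "in_cat_J sc E d \<longleftrightarrow>
    vector_space sc \<and>
    \<comment> \<open>F(T^n)-module structure\<close>
    (\<forall>m. Vector_Spaces.linear sc sc (E m)) \<and>
    (\<forall>w. E zidx w = w) \<and>
    (\<forall>m k w. E m (E k w) = E (addz m k) w) \<and>
    \<comment> \<open>W_n-module structure\<close>
    (\<forall>j s. Vector_Spaces.linear sc sc (d j s)) \<and>
    (\<forall>j k s m w. d j s (d k m w) - d k m (d j s w)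
        = sc (of_int (m j)) (d k (addz s m) w) - sc (of_int (s k)) (d j (addz s m) w)) \<and>
    \<comment> \<open>(J1) each d_j = d_j(0) acts diagonalizably\<close>
    (\<forall>j. module.span sc {w. \<exists>c. d j zidx w = sc c w} = UNIV) \<and>
    \<comment> \<open>(J2)\<close>
    free_finite_rank sc E \<and>
    \<comment> \<open>(J3) u(fw) = (uf)w + f(uw), with d_j(s) e_m = m_j e_(m+s)\<close>
    (\<forall>j s m w. d j s (E m w) = sc (of_int (m j)) (E (addz m s) w) + E m (d j s w))"

definition submodule_J ::
  "(complex \<Rightarrow> 'v::ab_group_add \<Rightarrow> 'v) \<Rightarrow> (('n::finite \<Rightarrow> int) \<Rightarrow> 'v \<Rightarrow> 'v)
    \<Rightarrow> ('n \<Rightarrow> ('n \<Rightarrow> int) \<Rightarrow> 'v \<Rightarrow> 'v) \<Rightarrow> 'v set \<Rightarrow> bool" where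
  "submodule_J sc E d W \<longleftrightarrow>
    module.subspace sc W \<and> (\<forall>m. \<forall>w\<in>W. E m w \<in> W) \<and> (\<forall>j s. \<forall>w\<in>W. d j s w \<in> W)"

definition indecomposable_J ::
  "(complex \<Rightarrow> 'v::ab_group_add \<Rightarrow> 'v) \<Rightarrow> (('n::finite \<Rightarrow> int) \<Rightarrow> 'v \<Rightarrow> 'v)
    \<Rightarrow> ('n \<Rightarrow> ('n \<Rightarrow> int) \<Rightarrow> 'v \<Rightarrow> 'v) \<Rightarrow> bool" where
  "indecomposable_J sc E d \<longleftrightarrow>
    (\<exists>w::'v. w \<noteq> 0) \<and>
    \<not> (\<exists>W1 W2. submodule_J sc E d W1 \<and> submodule_J sc E d W2 \<and>
          W1 \<noteq> {0} \<and> W2 \<noteq> {0} \<and> W1 \<inter> W2 = {0} \<and>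
          (\<forall>w. \<exists>a\<in>W1. \<exists>b\<in>W2. w = a + b))"

definition weight_space ::
  "(complex \<Rightarrow> 'v \<Rightarrow> 'v) \<Rightarrow> ('n \<Rightarrow> ('n \<Rightarrow> int) \<Rightarrow> 'v \<Rightarrow> 'v) \<Rightarrow> ('n \<Rightarrow> complex) \<Rightarrow> 'v set" where
  "weight_space sc d lam = {w. \<forall>j. d j zidx w = sc (lam j) w}"

definition Dop ::
  "(('n \<Rightarrow> int) \<Rightarrow> 'v \<Rightarrow> 'v) \<Rightarrow> ('n \<Rightarrow> ('n \<Rightarrow> int) \<Rightarrow> 'v \<Rightarrow> 'v) \<Rightarrow> 'n \<Rightarrow> ('n \<Rightarrow> int) \<Rightarrow> 'v \<Rightarrow> 'v"
  where "Dop E d j s u = E (negz s) (d j s u)"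

end

theory Submission
  imports Defs
begin

lemma lin_add: "Vector_Spaces.linear sc sc f \<Longrightarrow> f (x + y) = f x + f y"
  by (simp add: Vector_Spaces.linear_iff)
lemma lin_scale: "Vector_Spaces.linear sc sc f \<Longrightarrow> f (sc c x) = sc c (f x)"
  by (simp add: Vector_Spaces.linear_iff)
lemma lin_diff:
  fixes f :: "'v::ab_group_add \<Rightarrow> 'v"
  assumes "Vector_Spaces.linear sc sc f" shows "f (x - y) = f x - f y"
proof -
  have "f x = f ((x - y) + y)" by simp
  also have "\<dots> = f (x - y) + f y" using lin_add[OF assms] by blast
  finally show ?thesis by (simp add: algebra_simps)
qed

lemma addz_zidx_l[simp]: "addz zidx s = s" by (simp add: addz_def zidx_def)
lemma addz_zidx_r[simp]: "addz s zidx = s" by (simp add: addz_def zidx_def)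
lemma addz_neg1: "addz (negz s) (addz (negz m) s) = negz m" by (simp add: addz_def negz_def)
lemma addz_neg2: "addz (negz s) (negz m) = negz (addz s m)" by (simp add: addz_def negz_def fun_eq_iff)
lemma addz_neg3: "addz (negz m) (negz s) = negz (addz s m)" by (simp add: addz_def negz_def fun_eq_iff)
lemma addz_com: "addz m s = addz s m" by (simp add: addz_def fun_eq_iff)

theorem lemma1:
  fixes sc :: "complex \<Rightarrow> 'v::ab_group_add \<Rightarrow> 'v"
    and E :: "('n::finite \<Rightarrow> int) \<Rightarrow> 'v \<Rightarrow> 'v"
    and d :: "'n \<Rightarrow> ('n \<Rightarrow> int) \<Rightarrow> 'v \<Rightarrow> 'v"
    and lam :: "'n \<Rightarrow> complex"
  assumes "in_cat_J sc E d"
    and "indecomposable_J sc E d"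
    and "weight_space sc d lam \<noteq> {0}"
  shows "\<forall>j k s m. \<forall>u \<in> weight_space sc d lam.
           Dop E d j s u \<in> weight_space sc d lam \<and>
           Dop E d j s (Dop E d k m u) - Dop E d k m (Dop E d j s u)
             = sc (of_int (m j)) (Dop E d k (addz s m) u - Dop E d k m u)
               - sc (of_int (s k)) (Dop E d j (addz s m) u - Dop E d j s u)"
proof (intro allI ballI conjI)
  have VS: "vector_space sc" and EL: "\<And>m. Vector_Spaces.linear sc sc (E m)"
    and EE: "\<And>m k w. E m (E k w) = E (addz m k) w"
    and DL: "\<And>j s. Vector_Spaces.linear sc sc (d j s)"
    and BR: "\<And>j k s m w. d j s (d k m w) - d k m (d j s w)
        = sc (of_int (m j)) (d k (addz s m) w) - sc (of_int (s k)) (d j (addz s m) w)"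
    and J3: "\<And>j s m w. d j s (E m w) = sc (of_int (m j)) (E (addz m s) w) + E m (d j s w)"
    using assms(1) unfolding in_cat_J_def by auto
  interpret vector_space sc by (rule VS)
  fix j k s m u
  assume u: "u \<in> weight_space sc d lam"
  hence uw: "\<And>i. d i zidx u = sc (lam i) u" by (simp add: weight_space_def)
  show "Dop E d j s u \<in> weight_space sc d lam"
    unfolding weight_space_def Dop_def
  proof (intro CollectI allI)
    fix i
    have b: "d i zidx (d j s u) - d j s (d i zidx u) = sc (of_int (s i)) (d j s u)"
      using BR[of i zidx j s u] by (simp add: fun_cong[OF zidx_def, of j])
    have c: "d i zidx (d j s u) = sc (lam i + of_int (s i)) (d j s u)"
      using b uw[of i] lin_scale[OF DL[of j s]] by (simp add: algebra_simps scale_left_distrib)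
    have "d i zidx (E (negz s) (d j s u))
        = sc (of_int (- s i)) (E (negz s) (d j s u)) + E (negz s) (sc (lam i + of_int (s i)) (d j s u))"
      using J3[of i zidx "negz s" "d j s u"] c by (simp add: negz_def)
    also have "\<dots> = sc (lam i) (E (negz s) (d j s u))"
      using lin_scale[OF EL[of "negz s"]] by (simp add: scale_left_diff_distrib[symmetric])
    finally show "d i zidx (E (negz s) (d j s u)) = sc (lam i) (E (negz s) (d j s u))" .
  qed
  have key: "\<And>j s k m. Dop E d j s (Dop E d k m u)
      = E (negz (addz s m)) (d j s (d k m u)) - sc (of_int (m j)) (Dop E d k m u)"
  proof -
    fix j s k m
    have "Dop E d j s (Dop E d k m u) = E (negz s) (d j s (E (negz m) (d k m u)))"
      by (simp add: Dop_def)
    also have "\<dots> = E (negz s) (sc (of_int (- m j)) (E (addz (negz m) s) (d k m u)) + E (negz m) (d j s (d k m u)))"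
      by (simp add: J3 negz_def)
    also have "\<dots> = sc (of_int (- m j)) (E (negz m) (d k m u)) + E (negz (addz s m)) (d j s (d k m u))"
      by (simp add: lin_add[OF EL] lin_diff[OF EL] lin_scale[OF EL] EE addz_neg1 addz_neg2)
    finally show "Dop E d j s (Dop E d k m u)
      = E (negz (addz s m)) (d j s (d k m u)) - sc (of_int (m j)) (Dop E d k m u)"
      by (simp add: Dop_def scale_minus_left)
  qed
  have "Dop E d j s (Dop E d k m u) - Dop E d k m (Dop E d j s u)
     = E (negz (addz s m)) (d j s (d k m u) - d k m (d j s u))
       - sc (of_int (m j)) (Dop E d k m u) + sc (of_int (s k)) (Dop E d j s u)"
    unfolding key[of j s k m] key[of k m j s] lin_diff[OF EL] addz_com[of m s]
    by (simp add: algebra_simps)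
  also have "\<dots> = sc (of_int (m j)) (Dop E d k (addz s m) u) - sc (of_int (s k)) (Dop E d j (addz s m) u)
       - sc (of_int (m j)) (Dop E d k m u) + sc (of_int (s k)) (Dop E d j s u)"
    unfolding BR lin_diff[OF EL] lin_scale[OF EL] Dop_def by simp
  also have "\<dots> = sc (of_int (m j)) (Dop E d k (addz s m) u - Dop E d k m u)
               - sc (of_int (s k)) (Dop E d j (addz s m) u - Dop E d j s u)"
    by (simp add: scale_right_diff_distrib algebra_simps)
  finally show "Dop E d j s (Dop E d k m u) - Dop E d k m (Dop E d j s u)
             = sc (of_int (m j)) (Dop E d k (addz s m) u - Dop E d k m u)
               - sc (of_int (s k)) (Dop E d j (addz s m) u - Dop E d j s u)" .
qed

end
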